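(* Let $\Delta$ be a repository, $C\in\mathrm{dom}(\Delta)$ with $C:\Delta(C)\in\Delta$, $E_1,\ldots,E_m$ combinatory terms, $\tau\in\mathbb{T}_C$ and $k\in\mathbb{N}$. The following are equivalent: (1) $\Delta\vdash_k C\,E_1\cdots E_m:\tau$; (2) there exists a set of paths $P\subseteq\mathbb{P}_m\big(\bigcap\{S(\Delta(C))\mid\mathrm{level}(S)\le k,\ \mathrm{atoms}(S)\subseteq\mathrm{atoms}(\Delta)\cup\mathrm{atoms}(\tau)\}\big)$ such that (a) $\bigcap_{\pi\in P}\mathrm{tgt}_m(\pi)\le\tau$ and (b) $\Delta\vdash_k E_i:\bigcap_{\pi\in P}\mathrm{arg}_i(\pi)$ for $1\le i\le m$.
   Context: Types $\mathbb{T}_C\ni\tau ::= a\mid\alpha\mid\omega\mid\tau_1\to\tau_2\mid\tau_1\cap\tau_2\mid c(\tau)$ ($a$ constants, $\alpha$ type variables, $c$ unary constructors). Subtyping $\le$: least preorder with $\sigma\le\omega$; $\omega\le\omega\to\omega$; $\sigma\cap\tau\le\sigma$; $\sigma\cap\tau\le\tau$; $\sigma\le\tau_1,\sigma\le\tau_2\Rightarrow\sigma\le\tau_1\cap\tau_2$; $(\sigma\to\tau_1)\cap(\sigma\to\tau_2)\le\sigma\to\tau_1\cap\tau_2$; $\sigma_2\le\sigma_1,\tau_1\le\tau_2\Rightarrow\sigma_1\to\tau_1\le\sigma_2\to\tau_2$; $\tau_1\le\tau_2\Rightarrow c(\tau_1)\le c(\tau_2)$; $c(\tau_1)\cap c(\tau_2)\le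 c(\tau_1\cap\tau_2)$. Level: $0$ for $\omega,a,\alpha$; $\mathrm{level}(c(\tau))=1+\mathrm{level}(\tau)$; $\mathrm{level}(\sigma\to\tau)=1+\max(\mathrm{level}(\sigma),\mathrm{level}(\tau))$; $\mathrm{level}(\sigma\cap\tau)=\max(\mathrm{level}(\sigma),\mathrm{level}(\tau))$; for a substitution $S$, $\mathrm{level}(S)=\max_{\alpha\in\mathrm{dom}(S)}\mathrm{level}(S(\alpha))$. A repository $\Delta$ is a finite set of $C:\tau$ with distinct names; $\Delta(C)$ is the type of $C$. Combinatory terms $E::=C\mid(E\,E')$. Rules of $\Delta\vdash_k$: from $C:\tau\in\Delta$ and $\mathrm{level}(S)\le k$ infer $\Delta\vdash_k C:S(\tau)$; $\to$-elimination; $\cap$-introduction; subsumption along $\le$. Paths: $\pi ::= a\mid\alpha\mid\sigma\to\pi\mid c(\omega)\mid c(\pi)$. The set of paths of a type: $\mathbb{P}(a)=\{a\}$, $\mathbb{P}(\alpha)=\{\alpha\}$, $\mathbb{P}(\omega)=\emptyset$, $\mathbb{P}(\sigma\to\tau)=\{\sigma\to\pi\mid\pi\in\mathbb{P}(\tau)\}$, $\mathbb{P}(\sigma\cap\tau)=\mathbb{P}(\sigma)\cup\mathbb{P}(\tau)$, $\mathbb{P}(c(\tau))=\{c(\omega)\}$ if $\mathbb{P}(\tau)=\emptyset$ and $\{c(\pi)\mid\pi\in\mathbb{P}(\tau)\}$ otherwise. A path has arity at least $m$ if it is $\sigma_1\to\cdots\to\sigma_m\to\tau$; then $\mathrm{arg}_i(\pi)=\sigma_i$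 and $\mathrm{tgt}_m(\pi)=\tau$. $\mathbb{P}_m(\tau)$ is the set of paths in $\mathbb{P}(\tau)$ of arity at least $m$. The intersection of an empty family is $\omega$. $\mathrm{atoms}(\tau)$ is the set of constants, type variables and constructor names occurring in $\tau$; $\mathrm{atoms}(S)=\bigcup_{\alpha\in\mathrm{dom}(S)}\mathrm{atoms}(S(\alpha))$; $\mathrm{atoms}(\Delta)=\bigcup_{C:\tau\in\Delta}\mathrm{atoms}(\tau)$. The intersection over substitutions in (2) is taken modulo type equivalence $=$ (there are only finitely many such instances up to $=$). *)

theory Defs
  imports Main
begin

datatype ('a, 'v, 'c) ty =
    Const 'a
  | TVar 'v
  | Omega
  | Arr "('a, 'v, 'c) ty" "('a, 'v, 'c) ty"
  | Inter "('a, 'v, 'c) ty" "('a, 'v, 'c) ty"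
  | Ctor 'c "('a, 'v, 'c) ty"

inductive subtype :: "('a, 'v, 'c) ty \<Rightarrow> ('a, 'v, 'c) ty \<Rightarrow> bool" (infix "\<le>\<^sub>T" 50) where
  refl: "s \<le>\<^sub>T s"
| trans: "s \<le>\<^sub>T t \<Longrightarrow> t \<le>\<^sub>T u \<Longrightarrow> s \<le>\<^sub>T u"
| omega: "s \<le>\<^sub>T Omega"
| omega_arr: "Omega \<le>\<^sub>T Arr Omega Omega"
| inter1: "Inter s t \<le>\<^sub>T s"
| inter2: "Inter s t \<le>\<^sub>T t"
| glb: "s \<le>\<^sub>T t1 \<Longrightarrow> s \<le>\<^sub>T t2 \<Longrightarrow> s \<le>\<^sub>T Inter t1 t2"
| arr_dist: "Inter (Arr s t1) (Arr s t2) \<le>\<^sub>T Arr s (Inter t1 t2)"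
| arr: "s2 \<le>\<^sub>T s1 \<Longrightarrow> t1 \<le>\<^sub>T t2 \<Longrightarrow> Arr s1 t1 \<le>\<^sub>T Arr s2 t2"
| ctor: "t1 \<le>\<^sub>T t2 \<Longrightarrow> Ctor c t1 \<le>\<^sub>T Ctor c t2"
| ctor_dist: "Inter (Ctor c t1) (Ctor c t2) \<le>\<^sub>T Ctor c (Inter t1 t2)"

fun level :: "('a, 'v, 'c) ty \<Rightarrow> nat" where
  "level (Const a) = 0"
| "level (TVar v) = 0"
| "level Omega = 0"
| "level (Ctor c t) = Suc (level t)"
| "level (Arr s t) = Suc (max (level s) (level t))"
| "level (Inter s t) = max (level s) (level t)"

fun subst :: "('v \<Rightarrow> ('a, 'v, 'c) ty) \<Rightarrow> ('a, 'v, 'c) ty \<Rightarrow> ('a, 'v, 'c) ty" where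
  "subst S (Const a) = Const a"
| "subst S (TVar v) = S v"
| "subst S Omega = Omega"
| "subst S (Arr s t) = Arr (subst S s) (subst S t)"
| "subst S (Inter s t) = Inter (subst S s) (subst S t)"
| "subst S (Ctor c t) = Ctor c (subst S t)"

definition sdom :: "('v \<Rightarrow> ('a, 'v, 'c) ty) \<Rightarrow> 'v set" where
  "sdom S = {v. S v \<noteq> TVar v}"

definition is_subst :: "('v \<Rightarrow> ('a, 'v, 'c) ty) \<Rightarrow> bool" where
  "is_subst S \<longleftrightarrow> finite (sdom S)"

definition level_subst :: "('v \<Rightarrow> ('a, 'v, 'c) ty) \<Rightarrow> nat" where
  "level_subst S = Max (insert 0 ((\<lambda>v. level (S v)) ` sdom S))"

datatype ('a, 'v, 'c) atom = AConst 'a | AVar 'v | ACtor 'c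

fun atoms :: "('a, 'v, 'c) ty \<Rightarrow> ('a, 'v, 'c) atom set" where
  "atoms (Const a) = {AConst a}"
| "atoms (TVar v) = {AVar v}"
| "atoms Omega = {}"
| "atoms (Arr s t) = atoms s \<union> atoms t"
| "atoms (Inter s t) = atoms s \<union> atoms t"
| "atoms (Ctor c t) = insert (ACtor c) (atoms t)"

definition atoms_subst :: "('v \<Rightarrow> ('a, 'v, 'c) ty) \<Rightarrow> ('a, 'v, 'c) atom set" where
  "atoms_subst S = (\<Union>v\<in>sdom S. atoms (S v))"

type_synonym ('n, 'a, 'v, 'c) repo = "'n \<rightharpoonup> ('a, 'v, 'c) ty"

definition repository :: "('n, 'a, 'v, 'c) repo \<Rightarrow> bool" where
  "repository \<Delta> \<longleftrightarrow> finite (dom \<Delta>)"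

definition atoms_repo :: "('n, 'a, 'v, 'c) repo \<Rightarrow> ('a, 'v, 'c) atom set" where
  "atoms_repo \<Delta> = (\<Union>t\<in>ran \<Delta>. atoms t)"

datatype 'n cterm = Comb 'n | App "'n cterm" "'n cterm"

inductive typing :: "('n, 'a, 'v, 'c) repo \<Rightarrow> nat \<Rightarrow> 'n cterm \<Rightarrow> ('a, 'v, 'c) ty \<Rightarrow> bool" where
  var: "\<Delta> C = Some t \<Longrightarrow> is_subst S \<Longrightarrow> level_subst S \<le> k \<Longrightarrow> typing \<Delta> k (Comb C) (subst S t)"
| arr_elim: "typing \<Delta> k E (Arr s t) \<Longrightarrow> typing \<Delta> k E' s \<Longrightarrow> typing \<Delta> k (App E E') t"
| inter_intro: "typing \<Delta> k E s \<Longrightarrow> typing \<Delta> k E t \<Longrightarrow> typing \<Delta> k E (Inter s t)"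
| sub: "typing \<Delta> k E s \<Longrightarrow> s \<le>\<^sub>T t \<Longrightarrow> typing \<Delta> k E t"

definition apps :: "'n cterm \<Rightarrow> 'n cterm list \<Rightarrow> 'n cterm" where
  "apps E Es = foldl App E Es"

fun paths :: "('a, 'v, 'c) ty \<Rightarrow> ('a, 'v, 'c) ty set" where
  "paths (Const a) = {Const a}"
| "paths (TVar v) = {TVar v}"
| "paths Omega = {}"
| "paths (Arr s t) = Arr s ` paths t"
| "paths (Inter s t) = paths s \<union> paths t"
| "paths (Ctor c t) = (if paths t = {} then {Ctor c Omega} else Ctor c ` paths t)"

fun arity_ge :: "nat \<Rightarrow> ('a, 'v, 'c) ty \<Rightarrow> bool" where
  "arity_ge 0 t = True"
| "arity_ge (Suc m) (Arr s t) = arity_ge m t"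
| "arity_ge (Suc m) _ = False"

text \<open>arg_i (1-based) and tgt_m.\<close>
fun arg :: "nat \<Rightarrow> ('a, 'v, 'c) ty \<Rightarrow> ('a, 'v, 'c) ty" where
  "arg (Suc 0) (Arr s t) = s"
| "arg (Suc (Suc i)) (Arr s t) = arg (Suc i) t"
| "arg _ _ = Omega"

fun tgt :: "nat \<Rightarrow> ('a, 'v, 'c) ty \<Rightarrow> ('a, 'v, 'c) ty" where
  "tgt 0 t = t"
| "tgt (Suc m) (Arr s t) = tgt m t"
| "tgt (Suc m) t = t"

definition paths_m :: "nat \<Rightarrow> ('a, 'v, 'c) ty set \<Rightarrow> ('a, 'v, 'c) ty set" where
  "paths_m m X = {p \<in> X. arity_ge m p}"

fun Inters :: "('a, 'v, 'c) ty list \<Rightarrow> ('a, 'v, 'c) ty" where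
  "Inters [] = Omega"
| "Inters [t] = t"
| "Inters (t # ts) = Inter t (Inters ts)"

text \<open>Paths of the intersection of the family of admissible instances of Delta(C):
  since P(s \<inter> t) = P(s) \<union> P(t), these are the union of the paths of all instances.\<close>
definition inst_paths :: "('n, 'a, 'v, 'c) repo \<Rightarrow> 'n \<Rightarrow> nat \<Rightarrow> ('a, 'v, 'c) ty \<Rightarrow> ('a, 'v, 'c) ty set" where
  "inst_paths \<Delta> C k \<tau> =
     (\<Union> {paths (subst S (the (\<Delta> C))) | S.
          is_subst S \<and> level_subst S \<le> k \<and> atoms_subst S \<subseteq> atoms_repo \<Delta> \<union> atoms \<tau>})"

end

theory Submission imports Defs begin

lemma Inters_lower: "y \<in> set xs \<Longrightarrow> Inters xs \<le>\<^sub>T y"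
  by (induction xs rule: Inters.induct) (auto intro: subtype.intros)

lemma Inters_greatest: "(\<And>y. y \<in> set ys \<Longrightarrow> x \<le>\<^sub>T y) \<Longrightarrow> x \<le>\<^sub>T Inters ys"
  by (induction ys rule: Inters.induct) (auto intro: subtype.intros)

lemma Inters_mono: "set ys \<subseteq> set xs \<Longrightarrow> Inters xs \<le>\<^sub>T Inters ys"
  by (rule Inters_greatest) (auto intro: Inters_lower)

lemma inter_mono: "a \<le>\<^sub>T a' \<Longrightarrow> b \<le>\<^sub>T b' \<Longrightarrow> Inter a b \<le>\<^sub>T Inter a' b'"
  by (meson subtype.glb subtype.inter1 subtype.inter2 subtype.trans)

lemma paths_Inters: "paths (Inters L) = \<Union>(paths ` set L)"
  by (induction L rule: Inters.induct) auto

fun pl :: "('a, 'v, 'c) ty \<Rightarrow> ('a, 'v, 'c) ty list" where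
  "pl (Const a) = [Const a]"
| "pl (TVar v) = [TVar v]"
| "pl Omega = []"
| "pl (Arr s t) = map (Arr s) (pl t)"
| "pl (Inter s t) = pl s @ pl t"
| "pl (Ctor c t) = (if pl t = [] then [Ctor c Omega] else map (Ctor c) (pl t))"

lemma set_pl: "set (pl t) = paths t"
  by (induction t) auto

lemma Inters_map_arr: "Inters (map (Arr s) L) \<le>\<^sub>T Arr s (Inters L)"
proof (induction L rule: Inters.induct)
  case 1
  then show ?case by simp (meson subtype.arr subtype.omega subtype.omega_arr subtype.refl subtype.trans)
next
  case (2 t)
  then show ?case by (simp add: subtype.refl)
next
  case (3 t v va)
  then show ?case
    by simp (meson inter_mono subtype.arr_dist subtype.refl subtype.trans)
qed

lemma Inters_map_ctor: "L \<noteq> [] \<Longrightarrow> Inters (map (Ctor c) L) \<le>\<^sub>T Ctor c (Inters L)"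
proof (induction L rule: Inters.induct)
  case 1
  then show ?case by simp
next
  case (2 t)
  then show ?case by (simp add: subtype.refl)
next
  case (3 t v va)
  then show ?case
    by simp (meson inter_mono subtype.ctor_dist subtype.refl subtype.trans)
qed

lemma Inters_append: "Inters (xs @ ys) \<le>\<^sub>T Inter (Inters xs) (Inters ys)"
  by (rule subtype.glb; rule Inters_mono; auto)

lemma Inters_pl: "Inters (pl t) \<le>\<^sub>T t"
proof (induction t)
  case (Arr s t)
  have "Inters (pl (Arr s t)) \<le>\<^sub>T Arr s (Inters (pl t))" using Inters_map_arr[of s "pl t"] by simp
  moreover have "Arr s (Inters (pl t)) \<le>\<^sub>T Arr s t" using Arr by (intro subtype.arr subtype.refl)
  ultimately show ?case by (rule subtype.trans)
next
  case (Inter s t)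
  have "Inters (pl (Inter s t)) \<le>\<^sub>T Inter (Inters (pl s)) (Inters (pl t))" using Inters_append[of "pl s" "pl t"] by simp
  moreover have "Inter (Inters (pl s)) (Inters (pl t)) \<le>\<^sub>T Inter s t" using Inter by (rule inter_mono)
  ultimately show ?case by (rule subtype.trans)
next
  case (Ctor c t)
  show ?case
  proof (cases "pl t = []")
    case True
    then show ?thesis using Ctor subtype.ctor[of Omega t c] by simp
  next
    case False
    then have "Inters (pl (Ctor c t)) \<le>\<^sub>T Ctor c (Inters (pl t))" using Inters_map_ctor[of "pl t" c] by simp
    moreover have "Ctor c (Inters (pl t)) \<le>\<^sub>T Ctor c t" using Ctor by (rule subtype.ctor)
    ultimately show ?thesis by (rule subtype.trans)
  qed
qed (simp_all add: subtype.refl)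

lemma path_le: "p \<in> paths x \<Longrightarrow> x \<le>\<^sub>T p"
proof (induction x arbitrary: p)
  case (Inter s t)
  then show ?case by (auto intro: subtype.trans[OF subtype.inter1] subtype.trans[OF subtype.inter2])
next
  case (Arr s t)
  then obtain q where "p = Arr s q" "q \<in> paths t" by auto
  moreover have "t \<le>\<^sub>T q" using Arr.IH(2) \<open>q \<in> paths t\<close> by blast
  ultimately show ?case using subtype.arr[OF subtype.refl] by simp
next
  case (Ctor c t)
  show ?case
  proof (cases "paths t = {}")
    case True
    then have "p = Ctor c Omega" using Ctor by simp
    then show ?thesis by (simp add: subtype.ctor subtype.omega)
  next
    case False
    then obtain q where "p = Ctor c q" "q \<in> paths t" using Ctor by auto
    moreover have "t \<le>\<^sub>T q" using Ctor.IH \<open>q \<in> paths t\<close> by blast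
    ultimately show ?thesis using subtype.ctor by simp
  qed
qed (auto simp: subtype.refl)


lemma paths_path: "p \<in> paths x \<Longrightarrow> paths p = {p}"
proof (induction x arbitrary: p)
  case (Arr s t)
  obtain q where q: "p = Arr s q" "q \<in> paths t" using Arr.prems by auto
  have "paths q = {q}" using Arr.IH(2) q(2) by blast
  then show ?case using q(1) by simp
next
  case (Inter s t)
  from Inter.prems have "p \<in> paths s \<or> p \<in> paths t" by simp
  then show ?case using Inter.IH by blast
next
  case (Ctor c t)
  show ?case
  proof (cases "paths t = {}")
    case True
    then show ?thesis using Ctor.prems by simp
  next
    case False
    then obtain q where q: "p = Ctor c q" "q \<in> paths t" using Ctor.prems by auto
    have "paths q = {q}" using Ctor.IH q(2) by blast
    then show ?thesis using q(1) by simp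
  qed
qed auto

fun adom :: "('a, 'v, 'c) ty \<Rightarrow> ('a, 'v, 'c) ty" where
  "adom (Arr a b) = a" | "adom _ = Omega"
fun cod :: "('a, 'v, 'c) ty \<Rightarrow> ('a, 'v, 'c) ty" where
  "cod (Arr a b) = b" | "cod _ = Omega"
fun inner :: "('a, 'v, 'c) ty \<Rightarrow> ('a, 'v, 'c) ty" where
  "inner (Ctor c x) = x" | "inner _ = Omega"

fun Cov :: "('a, 'v, 'c) ty \<Rightarrow> ('a, 'v, 'c) ty \<Rightarrow> bool" where
  "Cov r (Arr s q) = (\<exists>P. set P \<subseteq> {\<pi>\<in>paths r. \<exists>a b. \<pi> = Arr a b} \<and>
      s \<le>\<^sub>T Inters (map adom P) \<and> Inters (map cod P) \<le>\<^sub>T q)"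
| "Cov r (Ctor c q) = (\<exists>P. P \<noteq> [] \<and> set P \<subseteq> {\<pi>\<in>paths r. \<exists>x. \<pi> = Ctor c x} \<and>
      Inters (map inner P) \<le>\<^sub>T q)"
| "Cov r Omega = True"
| "Cov r (Inter a b) = True"
| "Cov r (Const a) = (Const a \<in> paths r)"
| "Cov r (TVar v) = (TVar v \<in> paths r)"

definition Inv where "Inv r t = (\<forall>p\<in>paths t. Cov r p)"

lemma Cov_mono: "Cov r p \<Longrightarrow> paths r \<subseteq> paths r' \<Longrightarrow> Cov r' p"
proof (cases p)
  case (Arr s q)
  assume "Cov r p" "paths r \<subseteq> paths r'"
  then show ?thesis using Arr by (simp, blast)
next
  case (Ctor c q)
  assume "Cov r p" "paths r \<subseteq> paths r'"
  then show ?thesis using Ctor by (simp, blast)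
qed auto

lemma Cov_self: "p \<in> paths r \<Longrightarrow> Cov r p"
proof (cases p)
  case (Arr s q)
  assume "p \<in> paths r"
  then show ?thesis using Arr by (auto intro!: exI[of _ "[p]"] simp: subtype.refl)
next
  case (Ctor c q)
  assume "p \<in> paths r"
  then show ?thesis using Ctor by (auto intro!: exI[of _ "[p]"] simp: subtype.refl)
qed auto


declare subtype.trans[trans]

lemma Cov_trans:
  assumes inv: "Inv s t" and c: "Cov t p"
  shows "Cov s p"
proof (cases p)
  case (Const a)
  then show ?thesis using inv c by (simp add: Inv_def) (metis Cov.simps(5))
next
  case (TVar v)
  then show ?thesis using inv c by (simp add: Inv_def) (metis Cov.simps(6))
next
  case Omega
  then show ?thesis by simp
next
  case (Inter a b)
  then show ?thesis by simp
next
  case (Arr s' q)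
  from c Arr obtain P where P: "set P \<subseteq> {\<pi>\<in>paths t. \<exists>a b. \<pi> = Arr a b}"
    "s' \<le>\<^sub>T Inters (map adom P)" "Inters (map cod P) \<le>\<^sub>T q" by auto
  have "\<forall>\<pi>\<in>set P. \<exists>Q. set Q \<subseteq> {\<pi>\<in>paths s. \<exists>a b. \<pi> = Arr a b} \<and>
      adom \<pi> \<le>\<^sub>T Inters (map adom Q) \<and> Inters (map cod Q) \<le>\<^sub>T cod \<pi>"
  proof
    fix \<pi> assume "\<pi> \<in> set P"
    then obtain a b where ab: "\<pi> = Arr a b" "\<pi> \<in> paths t" using P(1) by auto
    then have "Cov s \<pi>" using inv by (auto simp: Inv_def)
    then show "\<exists>Q. set Q \<subseteq> {\<pi>\<in>paths s. \<exists>a b. \<pi> = Arr a b} \<and>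
      adom \<pi> \<le>\<^sub>T Inters (map adom Q) \<and> Inters (map cod Q) \<le>\<^sub>T cod \<pi>" using ab by simp
  qed
  from bchoice[OF this] obtain f where f0: "\<forall>\<pi>\<in>set P. set (f \<pi>) \<subseteq> {\<pi>\<in>paths s. \<exists>a b. \<pi> = Arr a b} \<and>
      adom \<pi> \<le>\<^sub>T Inters (map adom (f \<pi>)) \<and> Inters (map cod (f \<pi>)) \<le>\<^sub>T cod \<pi>"
    by blast
  note f = bspec[OF f0]
  define Q where "Q = concat (map f P)"
  have "set Q \<subseteq> {\<pi>\<in>paths s. \<exists>a b. \<pi> = Arr a b}" using f0 unfolding Q_def by auto
  moreover have "s' \<le>\<^sub>T Inters (map adom Q)"
  proof (rule Inters_greatest)
    fix y assume "y \<in> set (map adom Q)"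
    then obtain \<pi> x where x: "\<pi> \<in> set P" "x \<in> set (f \<pi>)" "y = adom x" by (auto simp: Q_def)
    have "Inters (map adom P) \<le>\<^sub>T adom \<pi>" using x(1) by (intro Inters_lower) auto
    with P(2) have "s' \<le>\<^sub>T adom \<pi>" by (rule subtype.trans)
    also have "adom \<pi> \<le>\<^sub>T Inters (map adom (f \<pi>))" using f x(1) by blast
    also have "Inters (map adom (f \<pi>)) \<le>\<^sub>T y" using x by (auto intro: Inters_lower)
    finally show "s' \<le>\<^sub>T y" .
  qed
  moreover have "Inters (map cod Q) \<le>\<^sub>T q"
  proof -
    have "Inters (map cod Q) \<le>\<^sub>T Inters (map cod P)"
    proof (rule Inters_greatest)
      fix y assume "y \<in> set (map cod P)"
      then obtain \<pi> where x: "\<pi> \<in> set P" "y = cod \<pi>" by auto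
      have "Inters (map cod Q) \<le>\<^sub>T Inters (map cod (f \<pi>))"
        using x by (intro Inters_mono) (auto simp: Q_def)
      also have "\<dots> \<le>\<^sub>T y" using f x by blast
      finally show "Inters (map cod Q) \<le>\<^sub>T y" .
    qed
    then show ?thesis using P(3) by (rule subtype.trans)
  qed
  ultimately show ?thesis unfolding Arr Cov.simps by blast
next
  case (Ctor c q)
  from c Ctor obtain P where P: "P \<noteq> []" "set P \<subseteq> {\<pi>\<in>paths t. \<exists>x. \<pi> = Ctor c x}"
    "Inters (map inner P) \<le>\<^sub>T q" by auto
  have "\<forall>\<pi>\<in>set P. \<exists>Q. Q \<noteq> [] \<and> set Q \<subseteq> {\<pi>\<in>paths s. \<exists>x. \<pi> = Ctor c x} \<and>
      Inters (map inner Q) \<le>\<^sub>T inner \<pi>"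
  proof
    fix \<pi> assume "\<pi> \<in> set P"
    then obtain x where ab: "\<pi> = Ctor c x" "\<pi> \<in> paths t" using P(2) by auto
    then have "Cov s \<pi>" using inv by (auto simp: Inv_def)
    then show "\<exists>Q. Q \<noteq> [] \<and> set Q \<subseteq> {\<pi>\<in>paths s. \<exists>x. \<pi> = Ctor c x} \<and>
      Inters (map inner Q) \<le>\<^sub>T inner \<pi>" using ab by simp
  qed
  from bchoice[OF this] obtain f where f0: "\<forall>\<pi>\<in>set P. f \<pi> \<noteq> [] \<and> set (f \<pi>) \<subseteq> {\<pi>\<in>paths s. \<exists>x. \<pi> = Ctor c x} \<and>
      Inters (map inner (f \<pi>)) \<le>\<^sub>T inner \<pi>"
    by blast
  note f = bspec[OF f0]
  define Q where "Q = concat (map f P)"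
  have "set Q \<subseteq> {\<pi>\<in>paths s. \<exists>x. \<pi> = Ctor c x}" using f0 unfolding Q_def by auto
  moreover have "Q \<noteq> []"
  proof -
    obtain \<pi> where "\<pi> \<in> set P" using P(1) by (cases P) auto
    then show ?thesis using f[of \<pi>] by (auto simp: Q_def)
  qed
  moreover have "Inters (map inner Q) \<le>\<^sub>T q"
  proof -
    have "Inters (map inner Q) \<le>\<^sub>T Inters (map inner P)"
    proof (rule Inters_greatest)
      fix y assume "y \<in> set (map inner P)"
      then obtain \<pi> where x: "\<pi> \<in> set P" "y = inner \<pi>" by auto
      have "Inters (map inner Q) \<le>\<^sub>T Inters (map inner (f \<pi>))"
        using x by (intro Inters_mono) (auto simp: Q_def)
      also have "\<dots> \<le>\<^sub>T y" using f x by blast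
      finally show "Inters (map inner Q) \<le>\<^sub>T y" .
    qed
    then show ?thesis using P(3) by (rule subtype.trans)
  qed
  ultimately show ?thesis unfolding Ctor Cov.simps by blast
qed


lemma Inv_sub: "s \<le>\<^sub>T t \<Longrightarrow> Inv s t"
proof (induction rule: subtype.induct)
  case (refl s)
  then show ?case by (auto simp: Inv_def intro: Cov_self)
next
  case (trans s t u)
  then show ?case using Cov_trans unfolding Inv_def by (meson Inv_def)
next
  case (omega s)
  then show ?case by (simp add: Inv_def)
next
  case omega_arr
  then show ?case by (simp add: Inv_def)
next
  case (inter1 s t)
  then show ?case by (auto simp: Inv_def intro: Cov_self)
next
  case (inter2 s t)
  then show ?case by (auto simp: Inv_def intro: Cov_self)
next
  case (glb s t1 t2)
  then show ?case unfolding Inv_def by (simp only: paths.simps) blast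
next
  case (arr_dist s t1 t2)
  show ?case unfolding Inv_def
  proof
    fix p assume "p \<in> paths (Arr s (Inter t1 t2))"
    then have "p \<in> paths (Inter (Arr s t1) (Arr s t2))" by auto
    then show "Cov (Inter (Arr s t1) (Arr s t2)) p" by (rule Cov_self)
  qed
next
  case (arr s2 s1 t1 t2)
  show ?case unfolding Inv_def
  proof
    fix p assume "p \<in> paths (Arr s2 t2)"
    then obtain q where q: "p = Arr s2 q" "q \<in> paths t2" by auto
    define P where "P = map (Arr s1) (pl t1)"
    have "set P \<subseteq> {\<pi>\<in>paths (Arr s1 t1). \<exists>a b. \<pi> = Arr a b}" by (auto simp: P_def set_pl)
    moreover have "s2 \<le>\<^sub>T Inters (map adom P)"
      by (rule Inters_greatest) (auto simp: P_def arr.hyps(1))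
    moreover have "Inters (map cod P) \<le>\<^sub>T q"
    proof -
      have "map cod P = pl t1" by (simp add: P_def comp_def)
      then have "Inters (map cod P) \<le>\<^sub>T t1" using Inters_pl by simp
      also have "t1 \<le>\<^sub>T t2" by (rule arr.hyps(2))
      also have "t2 \<le>\<^sub>T q" using q(2) by (rule path_le)
      finally show ?thesis .
    qed
    ultimately show "Cov (Arr s1 t1) p" unfolding q Cov.simps by blast
  qed
next
  case (ctor t1 t2 c)
  show ?case unfolding Inv_def
  proof
    fix p assume p: "p \<in> paths (Ctor c t2)"
    define P where "P = pl (Ctor c t1)"
    have P1: "P \<noteq> []" by (simp add: P_def)
    have P2: "set P \<subseteq> {\<pi>\<in>paths (Ctor c t1). \<exists>x. \<pi> = Ctor c x}"
      unfolding P_def set_pl[symmetric] by (auto simp del: pl.simps simp: set_pl)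
    have P3: "Inters (map inner P) \<le>\<^sub>T t1"
    proof (cases "pl t1 = []")
      case True
      then show ?thesis using Inters_pl[of t1] by (simp add: P_def)
    next
      case False
      then show ?thesis using Inters_pl[of t1] by (simp add: P_def comp_def)
    qed
    show "Cov (Ctor c t1) p"
    proof (cases "paths t2 = {}")
      case True
      then have pe: "p = Ctor c Omega" using p by simp
      show ?thesis unfolding pe Cov.simps using P1 P2 subtype.omega by blast
    next
      case False
      then obtain q where q: "p = Ctor c q" "q \<in> paths t2" using p by auto
      have "Inters (map inner P) \<le>\<^sub>T t1" by (rule P3)
      also have "t1 \<le>\<^sub>T t2" by (rule ctor.hyps(1))
      also have "t2 \<le>\<^sub>T q" using q(2) by (rule path_le)
      finally have "Inters (map inner P) \<le>\<^sub>T q" .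
      then show ?thesis using P1 P2 unfolding q Cov.simps by blast
    qed
  qed
next
  case (ctor_dist c t1 t2)
  show ?case unfolding Inv_def
  proof
    fix p assume p: "p \<in> paths (Ctor c (Inter t1 t2))"
    show "Cov (Inter (Ctor c t1) (Ctor c t2)) p"
    proof (rule Cov_self)
      show "p \<in> paths (Inter (Ctor c t1) (Ctor c t2))"
        using p by (cases "paths t1 = {}"; cases "paths t2 = {}") auto
    qed
  qed
qed


lemma lemmaA:
  assumes "\<rho> \<le>\<^sub>T Arr \<sigma> \<tau>"
  shows "\<exists>Q. set Q \<subseteq> {\<pi>\<in>paths \<rho>. \<exists>a b. \<pi> = Arr a b} \<and>
      \<sigma> \<le>\<^sub>T Inters (map adom Q) \<and> Inters (map cod Q) \<le>\<^sub>T \<tau>"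
proof -
  have inv: "Inv \<rho> (Arr \<sigma> \<tau>)" using assms by (rule Inv_sub)
  have "\<forall>p\<in>set (pl \<tau>). \<exists>Q. set Q \<subseteq> {\<pi>\<in>paths \<rho>. \<exists>a b. \<pi> = Arr a b} \<and>
      \<sigma> \<le>\<^sub>T Inters (map adom Q) \<and> Inters (map cod Q) \<le>\<^sub>T p"
  proof
    fix p assume "p \<in> set (pl \<tau>)"
    then have "Arr \<sigma> p \<in> paths (Arr \<sigma> \<tau>)" by (simp add: set_pl)
    then have "Cov \<rho> (Arr \<sigma> p)" using inv unfolding Inv_def by blast
    then show "\<exists>Q. set Q \<subseteq> {\<pi>\<in>paths \<rho>. \<exists>a b. \<pi> = Arr a b} \<and>
      \<sigma> \<le>\<^sub>T Inters (map adom Q) \<and> Inters (map cod Q) \<le>\<^sub>T p" by simp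
  qed
  from bchoice[OF this] obtain f where f0: "\<forall>p\<in>set (pl \<tau>). set (f p) \<subseteq> {\<pi>\<in>paths \<rho>. \<exists>a b. \<pi> = Arr a b} \<and>
      \<sigma> \<le>\<^sub>T Inters (map adom (f p)) \<and> Inters (map cod (f p)) \<le>\<^sub>T p" by blast
  note f = bspec[OF f0]
  define Q where "Q = concat (map f (pl \<tau>))"
  have "set Q \<subseteq> {\<pi>\<in>paths \<rho>. \<exists>a b. \<pi> = Arr a b}" using f0 unfolding Q_def by auto
  moreover have "\<sigma> \<le>\<^sub>T Inters (map adom Q)"
  proof (rule Inters_greatest)
    fix y assume "y \<in> set (map adom Q)"
    then obtain p x where x: "p \<in> set (pl \<tau>)" "x \<in> set (f p)" "y = adom x" by (auto simp: Q_def)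
    have "\<sigma> \<le>\<^sub>T Inters (map adom (f p))" using f x(1) by blast
    also have "Inters (map adom (f p)) \<le>\<^sub>T y" using x by (auto intro: Inters_lower)
    finally show "\<sigma> \<le>\<^sub>T y" .
  qed
  moreover have "Inters (map cod Q) \<le>\<^sub>T \<tau>"
  proof -
    have "Inters (map cod Q) \<le>\<^sub>T Inters (pl \<tau>)"
    proof (rule Inters_greatest)
      fix p assume x: "p \<in> set (pl \<tau>)"
      have "Inters (map cod Q) \<le>\<^sub>T Inters (map cod (f p))"
        using x by (intro Inters_mono) (auto simp: Q_def)
      also have "\<dots> \<le>\<^sub>T p" using f x by blast
      finally show "Inters (map cod Q) \<le>\<^sub>T p" .
    qed
    also have "Inters (pl \<tau>) \<le>\<^sub>T \<tau>" by (rule Inters_pl)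
    finally show ?thesis .
  qed
  ultimately show ?thesis by blast
qed

fun arrows :: "('a, 'v, 'c) ty list \<Rightarrow> ('a, 'v, 'c) ty \<Rightarrow> ('a, 'v, 'c) ty" where
  "arrows [] t = t" | "arrows (s # ss) t = Arr s (arrows ss t)"

lemma Inters_eq_set: "set xs = set ys \<Longrightarrow> Inters xs \<le>\<^sub>T Inters ys"
  by (rule Inters_mono) simp

lemma key:
  "\<rho> \<le>\<^sub>T arrows \<sigma>s \<tau> \<Longrightarrow> \<exists>P. set P \<subseteq> {\<pi>\<in>paths \<rho>. arity_ge (length \<sigma>s) \<pi>}
     \<and> Inters (map (tgt (length \<sigma>s)) P) \<le>\<^sub>T \<tau>
     \<and> (\<forall>i<length \<sigma>s. \<sigma>s ! i \<le>\<^sub>T Inters (map (arg (Suc i)) P))"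
proof (induction \<sigma>s arbitrary: \<rho>)
  case Nil
  have m: "map (tgt 0) (pl \<rho>) = pl \<rho>" by (metis map_idI tgt.simps(1))
  have "Inters (map (tgt 0) (pl \<rho>)) \<le>\<^sub>T \<tau>"
    unfolding m using subtype.trans[OF Inters_pl Nil[simplified]] .
  then show ?case by (intro exI[of _ "pl \<rho>"]) (simp add: set_pl m)
next
  case (Cons \<sigma> \<sigma>s)
  let ?m = "length \<sigma>s"
  from lemmaA[of \<rho> \<sigma> "arrows \<sigma>s \<tau>"] Cons.prems obtain Q where
    Q: "set Q \<subseteq> {\<pi>\<in>paths \<rho>. \<exists>a b. \<pi> = Arr a b}"
      "\<sigma> \<le>\<^sub>T Inters (map adom Q)" "Inters (map cod Q) \<le>\<^sub>T arrows \<sigma>s \<tau>" by auto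
  from Cons.IH[OF Q(3)] obtain P' where P':
    "set P' \<subseteq> {\<pi>\<in>paths (Inters (map cod Q)). arity_ge ?m \<pi>}"
    "Inters (map (tgt ?m) P') \<le>\<^sub>T \<tau>"
    "\<forall>i<?m. \<sigma>s ! i \<le>\<^sub>T Inters (map (arg (Suc i)) P')" by blast
  have pc: "paths (Inters (map cod Q)) = cod ` set Q"
  proof -
    have "paths (cod \<pi>) = {cod \<pi>}" if "\<pi> \<in> set Q" for \<pi>
    proof -
      obtain a b where ab: "\<pi> = Arr a b" "\<pi> \<in> paths \<rho>" using Q(1) \<open>\<pi> \<in> set Q\<close> by auto
      then have "paths (Arr a b) = {Arr a b}" using paths_path by blast
      then have "paths b = {b}" by auto
      then show ?thesis using ab by simp
    qed
    then show ?thesis by (auto simp: paths_Inters)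
  qed
  define P where "P = filter (\<lambda>\<pi>. cod \<pi> \<in> set P') Q"
  have setc: "set (map cod P) = set P'"
  proof
    show "set (map cod P) \<subseteq> set P'" by (auto simp: P_def)
    show "set P' \<subseteq> set (map cod P)"
    proof
      fix x assume "x \<in> set P'"
      then have "x \<in> cod ` set Q" using P'(1) pc by auto
      then obtain \<pi> where "\<pi> \<in> set Q" "x = cod \<pi>" by auto
      then show "x \<in> set (map cod P)" using \<open>x \<in> set P'\<close> by (auto simp: P_def)
    qed
  qed
  have Parr: "\<pi> \<in> set P \<Longrightarrow> \<pi> = Arr (adom \<pi>) (cod \<pi>)" for \<pi>
    using Q(1) by (auto simp: P_def)
  have "set P \<subseteq> {\<pi>\<in>paths \<rho>. arity_ge (length (\<sigma> # \<sigma>s)) \<pi>}"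
  proof
    fix \<pi> assume "\<pi> \<in> set P"
    then have "\<pi> \<in> paths \<rho>" "cod \<pi> \<in> set P'" using Q(1) by (auto simp: P_def)
    then have "arity_ge ?m (cod \<pi>)" using P'(1) by auto
    then have "arity_ge (Suc ?m) (Arr (adom \<pi>) (cod \<pi>))" by simp
    then show "\<pi> \<in> {\<pi>\<in>paths \<rho>. arity_ge (length (\<sigma> # \<sigma>s)) \<pi>}"
      using Parr[OF \<open>\<pi> \<in> set P\<close>] \<open>\<pi> \<in> paths \<rho>\<close> by simp
  qed
  moreover have "Inters (map (tgt (length (\<sigma> # \<sigma>s))) P) \<le>\<^sub>T \<tau>"
  proof -
    have "map (tgt (Suc ?m)) P = map (tgt ?m) (map cod P)"
      using Parr by (auto intro!: map_cong) (metis tgt.simps(2))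
    then have "set (map (tgt (Suc ?m)) P) = set (map (tgt ?m) P')"
      using setc by (metis set_map)
    then have "Inters (map (tgt (Suc ?m)) P) \<le>\<^sub>T Inters (map (tgt ?m) P')"
      by (rule Inters_eq_set)
    also have "\<dots> \<le>\<^sub>T \<tau>" by (rule P'(2))
    finally show ?thesis by simp
  qed
  moreover have "\<forall>i<length (\<sigma> # \<sigma>s). (\<sigma> # \<sigma>s) ! i \<le>\<^sub>T Inters (map (arg (Suc i)) P)"
  proof (intro allI impI)
    fix i assume i: "i < length (\<sigma> # \<sigma>s)"
    show "(\<sigma> # \<sigma>s) ! i \<le>\<^sub>T Inters (map (arg (Suc i)) P)"
    proof (cases i)
      case 0
      have e: "map (arg (Suc 0)) P = map adom P"
        using Parr by (auto intro!: map_cong) (metis arg.simps(1))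
      have "Inters (map adom Q) \<le>\<^sub>T Inters (map adom P)"
        by (rule Inters_mono) (auto simp: P_def)
      then show ?thesis unfolding 0 e nth_Cons_0 using subtype.trans[OF Q(2)] by blast
    next
      case (Suc j)
      have "map (arg (Suc (Suc j))) P = map (arg (Suc j)) (map cod P)"
        using Parr by (auto intro!: map_cong) (metis arg.simps(2))
      then have "set (map (arg (Suc (Suc j))) P) = set (map (arg (Suc j)) P')"
        using setc by (metis set_map)
      then have "Inters (map (arg (Suc j)) P') \<le>\<^sub>T Inters (map (arg (Suc (Suc j))) P)"
        by (intro Inters_eq_set) simp
      moreover have "\<sigma>s ! j \<le>\<^sub>T Inters (map (arg (Suc j)) P')" using P'(3) i Suc by simp
      ultimately show ?thesis unfolding Suc nth_Cons_Suc using subtype.trans by blast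
    qed
  qed
  ultimately show ?case by blast
qed


lemma gen_app:
  "typing \<Delta> k T \<tau> \<Longrightarrow> T = App E E' \<Longrightarrow> \<exists>\<sigma>. typing \<Delta> k E (Arr \<sigma> \<tau>) \<and> typing \<Delta> k E' \<sigma>"
proof (induction arbitrary: E E' rule: typing.induct)
  case (var \<Delta> C t S k)
  then show ?case by simp
next
  case (arr_elim \<Delta> k E0 s t E0')
  then show ?case by auto
next
  case (inter_intro \<Delta> k E0 s t)
  then obtain \<sigma>1 \<sigma>2 where h: "typing \<Delta> k E (Arr \<sigma>1 s)" "typing \<Delta> k E' \<sigma>1"
    "typing \<Delta> k E (Arr \<sigma>2 t)" "typing \<Delta> k E' \<sigma>2" by blast
  have "typing \<Delta> k E (Inter (Arr \<sigma>1 s) (Arr \<sigma>2 t))" using h by (intro typing.inter_intro)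
  moreover have "Inter (Arr \<sigma>1 s) (Arr \<sigma>2 t) \<le>\<^sub>T Arr (Inter \<sigma>1 \<sigma>2) (Inter s t)"
  proof -
    have "Inter (Arr \<sigma>1 s) (Arr \<sigma>2 t) \<le>\<^sub>T Inter (Arr (Inter \<sigma>1 \<sigma>2) s) (Arr (Inter \<sigma>1 \<sigma>2) t)"
      by (intro inter_mono subtype.arr subtype.inter1 subtype.inter2 subtype.refl)
    also have "\<dots> \<le>\<^sub>T Arr (Inter \<sigma>1 \<sigma>2) (Inter s t)" by (rule subtype.arr_dist)
    finally show ?thesis .
  qed
  ultimately have "typing \<Delta> k E (Arr (Inter \<sigma>1 \<sigma>2) (Inter s t))" by (rule typing.sub)
  moreover have "typing \<Delta> k E' (Inter \<sigma>1 \<sigma>2)" using h by (intro typing.inter_intro)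
  ultimately show ?case by blast
next
  case (sub \<Delta> k E0 s t)
  then obtain \<sigma> where h: "typing \<Delta> k E (Arr \<sigma> s)" "typing \<Delta> k E' \<sigma>" by blast
  have "Arr \<sigma> s \<le>\<^sub>T Arr \<sigma> t" using sub.hyps(2) by (intro subtype.arr subtype.refl)
  with h show ?case using typing.sub by blast
qed

lemma apps_snoc: "apps E (xs @ [x]) = App (apps E xs) x"
  by (simp add: apps_def)

lemma gen_apps:
  "typing \<Delta> k (apps E Es) \<tau> \<Longrightarrow> \<exists>\<sigma>s. length \<sigma>s = length Es \<and> typing \<Delta> k E (arrows \<sigma>s \<tau>)
     \<and> (\<forall>i<length Es. typing \<Delta> k (Es ! i) (\<sigma>s ! i))"
proof (induction Es arbitrary: \<tau> rule: rev_induct)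
  case Nil
  then show ?case by (auto simp: apps_def)
next
  case (snoc x xs)
  from gen_app[OF snoc.prems[unfolded apps_snoc] HOL.refl] obtain \<sigma> where
    h: "typing \<Delta> k (apps E xs) (Arr \<sigma> \<tau>)" "typing \<Delta> k x \<sigma>" by blast
  from snoc.IH[OF h(1)] obtain \<sigma>s where s: "length \<sigma>s = length xs"
    "typing \<Delta> k E (arrows \<sigma>s (Arr \<sigma> \<tau>))" "\<forall>i<length xs. typing \<Delta> k (xs ! i) (\<sigma>s ! i)" by blast
  have "arrows \<sigma>s (Arr \<sigma> \<tau>) = arrows (\<sigma>s @ [\<sigma>]) \<tau>" by (induction \<sigma>s) auto
  moreover have "\<forall>i<length (xs @ [x]). typing \<Delta> k ((xs @ [x]) ! i) ((\<sigma>s @ [\<sigma>]) ! i)"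
    using s(1,3) h(2) by (auto simp: nth_append less_Suc_eq)
  ultimately show ?case using s by (intro exI[of _ "\<sigma>s @ [\<sigma>]"]) auto
qed

lemma gen_comb:
  "typing \<Delta> k T \<rho> \<Longrightarrow> T = Comb C \<Longrightarrow> \<exists>L. (\<forall>x\<in>set L. \<exists>S. is_subst S \<and> level_subst S \<le> k
      \<and> x = subst S (the (\<Delta> C))) \<and> Inters L \<le>\<^sub>T \<rho>"
proof (induction rule: typing.induct)
  case (var \<Delta> C' t S k)
  then show ?case by (intro exI[of _ "[subst S t]"]) (auto simp: subtype.refl)
next
  case (arr_elim \<Delta> k E s t E')
  then show ?case by simp
next
  case (inter_intro \<Delta> k E s t)
  then obtain L1 L2 where L: "\<forall>x\<in>set L1. \<exists>S. is_subst S \<and> level_subst S \<le> k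
      \<and> x = subst S (the (\<Delta> C))" "Inters L1 \<le>\<^sub>T s"
    "\<forall>x\<in>set L2. \<exists>S. is_subst S \<and> level_subst S \<le> k
      \<and> x = subst S (the (\<Delta> C))" "Inters L2 \<le>\<^sub>T t" by blast
  have "Inters (L1 @ L2) \<le>\<^sub>T Inter s t"
    using subtype.trans[OF Inters_append inter_mono[OF L(2) L(4)]] .
  then show ?case using L(1,3) by (intro exI[of _ "L1 @ L2"]) auto
next
  case (sub \<Delta> k E s t)
  then show ?case using subtype.trans by blast
qed


fun er :: "('a, 'v, 'c) atom set \<Rightarrow> ('a, 'v, 'c) ty \<Rightarrow> ('a, 'v, 'c) ty" where
  "er A (Const a) = (if AConst a \<in> A then Const a else Omega)"
| "er A (TVar v) = (if AVar v \<in> A then TVar v else Omega)"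
| "er A Omega = Omega"
| "er A (Arr s t) = Arr (er A s) (er A t)"
| "er A (Inter s t) = Inter (er A s) (er A t)"
| "er A (Ctor c t) = (if ACtor c \<in> A then Ctor c (er A t) else Omega)"

lemma er_le: "s \<le>\<^sub>T t \<Longrightarrow> er A s \<le>\<^sub>T er A t"
proof (induction rule: subtype.induct)
  case (trans s t u)
  then show ?case using subtype.trans by blast
next
  case (ctor t1 t2 c)
  then show ?case by (simp add: subtype.ctor subtype.refl)
next
  case (ctor_dist c t1 t2)
  then show ?case by (simp add: subtype.ctor_dist subtype.omega)
qed (simp_all add: subtype.intros)

lemma level_er: "level (er A t) \<le> level t"
  by (induction t) auto

lemma atoms_er: "atoms (er A t) \<subseteq> A"
  by (induction t) auto

lemma er_id: "atoms t \<subseteq> A \<Longrightarrow> er A t = t"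
  by (induction t) auto

lemma er_Inters: "er A (Inters L) = Inters (map (er A) L)"
  by (induction L rule: Inters.induct) auto

lemma er_arrows: "er A (arrows ss t) = arrows (map (er A) ss) (er A t)"
  by (induction ss) auto

lemma er_subst:
  assumes "atoms t \<subseteq> A" "is_subst S" "level_subst S \<le> k"
  shows "\<exists>S'. is_subst S' \<and> level_subst S' \<le> k \<and> atoms_subst S' \<subseteq> A \<and> er A (subst S t) = subst S' t"
proof -
  define S' where "S' v = (if v \<in> sdom S then er A (S v) else TVar v)" for v
  have sd: "sdom S' \<subseteq> sdom S" by (auto simp: sdom_def S'_def)
  have fin: "finite (sdom S)" using assms(2) by (simp add: is_subst_def)
  then have "is_subst S'" using sd finite_subset by (auto simp: is_subst_def)
  moreover have "level_subst S' \<le> level_subst S"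
    unfolding level_subst_def
  proof (rule Max.boundedI)
    show "finite (insert 0 ((\<lambda>v. level (S' v)) ` sdom S'))" using fin sd finite_subset by blast
    show "insert 0 ((\<lambda>v. level (S' v)) ` sdom S') \<noteq> {}" by simp
    fix a assume "a \<in> insert 0 ((\<lambda>v. level (S' v)) ` sdom S')"
    then show "a \<le> Max (insert 0 ((\<lambda>v. level (S v)) ` sdom S))"
    proof
      assume "a = 0" then show ?thesis by simp
    next
      assume "a \<in> (\<lambda>v. level (S' v)) ` sdom S'"
      then obtain v where v: "v \<in> sdom S'" "a = level (S' v)" by auto
      then have "v \<in> sdom S" using sd by auto
      then have "a \<le> level (S v)" using v level_er by (simp add: S'_def)
      also have "level (S v) \<le> Max (insert 0 ((\<lambda>v. level (S v)) ` sdom S))"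
        using fin \<open>v \<in> sdom S\<close> by (intro Max_ge) auto
      finally show ?thesis .
    qed
  qed
  moreover have "atoms_subst S' \<subseteq> A"
    unfolding atoms_subst_def using sd atoms_er by (auto simp: S'_def split: if_splits) blast+
  moreover have "er A (subst S t) = subst S' t"
    using assms(1)
  proof (induction t)
    case (TVar v)
    then show ?case by (auto simp: S'_def sdom_def)
  qed auto
  ultimately show ?thesis using assms(3) by force
qed

lemma er_typing:
  "typing \<Delta> k E t \<Longrightarrow> atoms_repo \<Delta> \<subseteq> A \<Longrightarrow> typing \<Delta> k E (er A t)"
proof (induction rule: typing.induct)
  case (var \<Delta> C t S k)
  then have "atoms t \<subseteq> A" by (auto simp: atoms_repo_def ran_def)
  from er_subst[OF this var.hyps(2,3)] obtain S' where
    "is_subst S'" "level_subst S' \<le> k" "er A (subst S t) = subst S' t" by blast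
  then show ?case using typing.var[of \<Delta> C t S' k] var.hyps(1) by simp
next
  case (arr_elim \<Delta> k E s t E')
  then show ?case using typing.arr_elim by fastforce
next
  case (inter_intro \<Delta> k E s t)
  then show ?case using typing.inter_intro by fastforce
next
  case (sub \<Delta> k E s t)
  then show ?case using typing.sub er_le by blast
qed


lemma tgt_arg: "arity_ge (Suc j) \<pi> \<Longrightarrow> tgt j \<pi> = Arr (arg (Suc j) \<pi>) (tgt (Suc j) \<pi>)"
proof (induction j arbitrary: \<pi>)
  case 0
  then show ?case by (cases \<pi>) auto
next
  case (Suc j)
  then show ?case by (cases \<pi>) auto
qed

lemma arity_mono: "arity_ge m \<pi> \<Longrightarrow> j \<le> m \<Longrightarrow> arity_ge j \<pi>"
proof (induction m \<pi> arbitrary: j rule: arity_ge.induct)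
  case (2 m s t)
  then show ?case by (cases j) auto
qed (auto)

lemma apps_take_Suc: "j < length Es \<Longrightarrow> apps E (take (Suc j) Es) = App (apps E (take j Es)) (Es ! j)"
  by (simp add: take_Suc_conv_app_nth apps_snoc)

lemma typing_omega_comb: "\<Delta> C = Some t \<Longrightarrow> typing \<Delta> k (Comb C) Omega"
proof -
  assume h: "\<Delta> C = Some t"
  have "typing \<Delta> k (Comb C) (subst TVar t)"
    by (rule typing.var[of \<Delta> C t, OF h]) (simp_all add: is_subst_def level_subst_def sdom_def)
  moreover have "subst TVar t = t" by (induction t) auto
  ultimately have "typing \<Delta> k (Comb C) t" by simp
  then show ?thesis using typing.sub subtype.omega by blast
qed

theorem lemma4p11:
  fixes \<Delta> :: "('n, 'a, 'v, 'c) repo" and C :: 'n and Es :: "'n cterm list"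
    and \<tau> :: "('a, 'v, 'c) ty" and k :: nat
  assumes "repository \<Delta>" and "C \<in> dom \<Delta>"
  shows "typing \<Delta> k (apps (Comb C) Es) \<tau> \<longleftrightarrow>
    (\<exists>P. set P \<subseteq> paths_m (length Es) (inst_paths \<Delta> C k \<tau>)
       \<and> Inters (map (tgt (length Es)) P) \<le>\<^sub>T \<tau>
       \<and> (\<forall>i\<in>{1..length Es}. typing \<Delta> k (Es ! (i - 1)) (Inters (map (arg i) P))))"
proof -
  obtain t0 where t0: "\<Delta> C = Some t0" using assms(2) by auto
  define A where "A = atoms_repo \<Delta> \<union> atoms \<tau>"
  have t0A: "atoms t0 \<subseteq> A" using t0 by (auto simp: A_def atoms_repo_def ran_def)
  show ?thesis
  proof
    assume ty: "typing \<Delta> k (apps (Comb C) Es) \<tau>"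
    from gen_apps[OF ty] obtain \<sigma>s where s: "length \<sigma>s = length Es"
      "typing \<Delta> k (Comb C) (arrows \<sigma>s \<tau>)" "\<forall>i<length Es. typing \<Delta> k (Es ! i) (\<sigma>s ! i)" by blast
    from gen_comb[OF s(2) HOL.refl] obtain L where L: "\<forall>x\<in>set L. \<exists>S. is_subst S \<and> level_subst S \<le> k
      \<and> x = subst S (the (\<Delta> C))" "Inters L \<le>\<^sub>T arrows \<sigma>s \<tau>" by blast
    have "er A (Inters L) \<le>\<^sub>T er A (arrows \<sigma>s \<tau>)" using L(2) by (rule er_le)
    moreover have "er A \<tau> = \<tau>" by (rule er_id) (simp add: A_def)
    ultimately have le: "Inters (map (er A) L) \<le>\<^sub>T arrows (map (er A) \<sigma>s) \<tau>"
      by (simp add: er_Inters er_arrows)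
    from key[OF le] obtain P where P: "set P \<subseteq> {\<pi>\<in>paths (Inters (map (er A) L)). arity_ge (length Es) \<pi>}"
      "Inters (map (tgt (length Es)) P) \<le>\<^sub>T \<tau>"
      "\<forall>i<length Es. map (er A) \<sigma>s ! i \<le>\<^sub>T Inters (map (arg (Suc i)) P)"
      using s(1) by auto
    have "set P \<subseteq> paths_m (length Es) (inst_paths \<Delta> C k \<tau>)"
    proof
      fix \<pi> assume "\<pi> \<in> set P"
      then obtain x where x: "x \<in> set L" "\<pi> \<in> paths (er A x)" "arity_ge (length Es) \<pi>"
        using P(1) by (auto simp: paths_Inters)
      then obtain S where S: "is_subst S" "level_subst S \<le> k" "x = subst S t0" using L(1) t0 by auto
      from er_subst[OF t0A S(1,2)] obtain S' where S': "is_subst S'" "level_subst S' \<le> k"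
        "atoms_subst S' \<subseteq> A" "er A (subst S t0) = subst S' t0" by blast
      have "\<pi> \<in> paths (subst S' (the (\<Delta> C)))" using x(2) S(3) S'(4) t0 by simp
      then have "\<pi> \<in> inst_paths \<Delta> C k \<tau>" unfolding inst_paths_def using S'(1,2,3)
        by (auto simp: A_def)
      then show "\<pi> \<in> paths_m (length Es) (inst_paths \<Delta> C k \<tau>)" using x(3) by (simp add: paths_m_def)
    qed
    moreover have "\<forall>i\<in>{1..length Es}. typing \<Delta> k (Es ! (i - 1)) (Inters (map (arg i) P))"
    proof
      fix i assume i: "i \<in> {1..length Es}"
      then obtain j where j: "i = Suc j" "j < length Es" by (cases i) auto
      have "typing \<Delta> k (Es ! j) (er A (\<sigma>s ! j))"
        using s(3) j(2) er_typing[of \<Delta> k "Es ! j" "\<sigma>s ! j" A] by (simp add: A_def)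
      moreover have "er A (\<sigma>s ! j) \<le>\<^sub>T Inters (map (arg i) P)" using P(3) j s(1) by simp
      ultimately show "typing \<Delta> k (Es ! (i - 1)) (Inters (map (arg i) P))"
        using typing.sub j(1) by simp
    qed
    ultimately show "\<exists>P. set P \<subseteq> paths_m (length Es) (inst_paths \<Delta> C k \<tau>)
       \<and> Inters (map (tgt (length Es)) P) \<le>\<^sub>T \<tau>
       \<and> (\<forall>i\<in>{1..length Es}. typing \<Delta> k (Es ! (i - 1)) (Inters (map (arg i) P)))"
      using P(2) by blast
  next
    assume "\<exists>P. set P \<subseteq> paths_m (length Es) (inst_paths \<Delta> C k \<tau>)
       \<and> Inters (map (tgt (length Es)) P) \<le>\<^sub>T \<tau>
       \<and> (\<forall>i\<in>{1..length Es}. typing \<Delta> k (Es ! (i - 1)) (Inters (map (arg i) P)))"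
    then obtain P where P: "set P \<subseteq> paths_m (length Es) (inst_paths \<Delta> C k \<tau>)"
      "Inters (map (tgt (length Es)) P) \<le>\<^sub>T \<tau>"
      "\<forall>i\<in>{1..length Es}. typing \<Delta> k (Es ! (i - 1)) (Inters (map (arg i) P))" by blast
    have Ej: "typing \<Delta> k (Es ! j) (Inters (map (arg (Suc j)) P))" if "j < length Es" for j
      using P(3) that by (metis One_nat_def Suc_leI atLeastAtMost_iff diff_Suc_1 le_add1 plus_1_eq_Suc zero_less_Suc less_eq_Suc_le)
    show "typing \<Delta> k (apps (Comb C) Es) \<tau>"
    proof (cases "P = []")
      case True
      have "\<forall>j\<le>length Es. typing \<Delta> k (apps (Comb C) (take j Es)) Omega"
      proof (intro allI impI)
        fix j assume "j \<le> length Es"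
        then show "typing \<Delta> k (apps (Comb C) (take j Es)) Omega"
        proof (induction j)
          case 0
          then show ?case using typing_omega_comb[of \<Delta> C t0 k, OF t0] by (simp add: apps_def)
        next
          case (Suc j)
          then have "typing \<Delta> k (apps (Comb C) (take j Es)) (Arr Omega Omega)"
            using typing.sub subtype.omega_arr by fastforce
          moreover have "typing \<Delta> k (Es ! j) Omega" using Ej[of j] Suc.prems True by simp
          ultimately show ?case using typing.arr_elim apps_take_Suc[of j Es] Suc.prems by fastforce
        qed
      qed
      then have "typing \<Delta> k (apps (Comb C) Es) Omega" by (metis order_refl take_all)
      then show ?thesis using P(2) True typing.sub by fastforce
    next
      case False
      have pi: "\<forall>\<pi>\<in>set P. typing \<Delta> k (Comb C) \<pi> \<and> arity_ge (length Es) \<pi>"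
      proof
        fix \<pi> assume "\<pi> \<in> set P"
        then have "\<pi> \<in> inst_paths \<Delta> C k \<tau>" "arity_ge (length Es) \<pi>"
          using P(1) by (auto simp: paths_m_def)
        then obtain S where S: "is_subst S" "level_subst S \<le> k" "\<pi> \<in> paths (subst S t0)"
          unfolding inst_paths_def using t0 by auto
        have "typing \<Delta> k (Comb C) (subst S t0)" using typing.var[of \<Delta> C t0 S k] t0 S by simp
        then have "typing \<Delta> k (Comb C) \<pi>" using typing.sub path_le[OF S(3)] by blast
        then show "typing \<Delta> k (Comb C) \<pi> \<and> arity_ge (length Es) \<pi>" using \<open>arity_ge (length Es) \<pi>\<close> by simp
      qed
      have "\<forall>j\<le>length Es. \<forall>\<pi>\<in>set P. typing \<Delta> k (apps (Comb C) (take j Es)) (tgt j \<pi>)"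
      proof (intro allI impI)
        fix j assume "j \<le> length Es"
        then show "\<forall>\<pi>\<in>set P. typing \<Delta> k (apps (Comb C) (take j Es)) (tgt j \<pi>)"
        proof (induction j)
          case 0
          then show ?case using pi by (simp add: apps_def)
        next
          case (Suc j)
          show ?case
          proof
            fix \<pi> assume p: "\<pi> \<in> set P"
            have ar: "arity_ge (Suc j) \<pi>" using pi p Suc.prems arity_mono by blast
            have "typing \<Delta> k (apps (Comb C) (take j Es)) (Arr (arg (Suc j) \<pi>) (tgt (Suc j) \<pi>))"
              using Suc.IH Suc.prems p tgt_arg[OF ar] by fastforce
            moreover have "typing \<Delta> k (Es ! j) (arg (Suc j) \<pi>)"
            proof -
              have "Inters (map (arg (Suc j)) P) \<le>\<^sub>T arg (Suc j) \<pi>" using p by (intro Inters_lower) auto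
              then show ?thesis using Ej[of j] Suc.prems typing.sub by fastforce
            qed
            ultimately show "typing \<Delta> k (apps (Comb C) (take (Suc j) Es)) (tgt (Suc j) \<pi>)"
              using typing.arr_elim apps_take_Suc[of j Es] Suc.prems by fastforce
          qed
        qed
      qed
      then have all: "\<forall>\<pi>\<in>set P. typing \<Delta> k (apps (Comb C) Es) (tgt (length Es) \<pi>)"
        by (metis order_refl take_all)
      have "\<And>L. L \<noteq> [] \<Longrightarrow> (\<forall>x\<in>set L. typing \<Delta> k (apps (Comb C) Es) x) \<Longrightarrow>
          typing \<Delta> k (apps (Comb C) Es) (Inters L)"
      proof -
        fix L :: "('a, 'v, 'c) ty list"
        show "L \<noteq> [] \<Longrightarrow> (\<forall>x\<in>set L. typing \<Delta> k (apps (Comb C) Es) x) \<Longrightarrow>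
          typing \<Delta> k (apps (Comb C) Es) (Inters L)"
          by (induction L rule: Inters.induct) (auto intro: typing.inter_intro)
      qed
      then have "typing \<Delta> k (apps (Comb C) Es) (Inters (map (tgt (length Es)) P))"
        using False all by simp
      then show ?thesis using P(2) typing.sub by blast
    qed
  qed
qed

end
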